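(* Let $P$ be a linear process, $a$ a name, and suppose $\mathrm{cin}(a,P)$ (respectively $\mathrm{cout}(a,P)$) and $P\to^* Q$. Then exactly one of the following holds: (1) $\mathrm{cin}(a,Q)$ (respectively $\mathrm{cout}(a,Q)$); (2) $a\notin\mathcal{N}(Q)$ and there exist processes $R_a, R'_a$ with $P\to^* R_a\to R'_a\to^* Q$, $a\notin\mathcal{N}(R'_a)$, $\mathcal{N}(R'_a)\cup\{a\}=\mathcal{N}(R_a)$, and $\mathrm{sync}(a,R_a)$.
   Context: Processes: $P ::= \mathbf{0} \mid \alpha.P \mid P\,|\,Q$ where $\alpha$ is a name $a$ or a co-name $\bar a$ (with $\bar{\bar a}=a$). Structural congruence $\equiv$ is the smallest congruence with $P|\mathbf{0}\equiv P$, $P|Q\equiv Q|P$, $P|(Q|R)\equiv(P|Q)|R$. Reduction $\to$ is the smallest relation with $a.P\,|\,\bar a.Q\to P\,|\,Q$, closed under parallel contexts and under $\equiv$; $\to^*$ is its reflexive–transitive closure. A process is linear if each name occurs at most once as an input $a$ and at most once as an output $\bar a$. $\mathcal{N}(P)$ is the set of names occurring in $P$ (as $a$ or $\bar a$). Process contexts: $C ::= [-] \mid P\,|\,C \mid C\,|\,P \mid \alpha.C$, with $C[Q]$ the result of filling the hole with $Q$. $\mathrm{in}(a,Q)$ iff $\exists Q',Q''.\ Q\equiv Q'\,|\,a.Q''$; $\mathrm{out}(a,Q)$ iff $\exists Q',Q''.\ Q\equiv Q'\,|\,\bar a.Q''$; $\mathrm{sync}(a,Q)$ iff both hold. $\mathrm{cin}(a,P)$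 iff there exist a process context $C$ and $Q$ with $P\equiv C[Q]$ and $\mathrm{in}(a,Q)$; $\mathrm{cout}(a,P)$ likewise with $\mathrm{out}(a,Q)$. *)

theory Defs
  imports Main
begin

datatype 'n act = In 'n | Out 'n

datatype 'n proc = Nil | Pre "'n act" "'n proc" | Par "'n proc" "'n proc"

inductive scong :: "'n proc \<Rightarrow> 'n proc \<Rightarrow> bool" (infix "\<equiv>\<^sub>s" 50) where
  par_nil: "Par P Nil \<equiv>\<^sub>s P"
| par_comm: "Par P Q \<equiv>\<^sub>s Par Q P"
| par_assoc: "Par P (Par Q R) \<equiv>\<^sub>s Par (Par P Q) R"
| refl: "P \<equiv>\<^sub>s P"
| sym: "P \<equiv>\<^sub>s Q \<Longrightarrow> Q \<equiv>\<^sub>s P"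
| trans: "P \<equiv>\<^sub>s Q \<Longrightarrow> Q \<equiv>\<^sub>s R \<Longrightarrow> P \<equiv>\<^sub>s R"
| cong_pre: "P \<equiv>\<^sub>s Q \<Longrightarrow> Pre \<alpha> P \<equiv>\<^sub>s Pre \<alpha> Q"
| cong_parL: "P \<equiv>\<^sub>s Q \<Longrightarrow> Par P R \<equiv>\<^sub>s Par Q R"
| cong_parR: "P \<equiv>\<^sub>s Q \<Longrightarrow> Par R P \<equiv>\<^sub>s Par R Q"

inductive red :: "'n proc \<Rightarrow> 'n proc \<Rightarrow> bool" (infix "\<longmapsto>" 50) where
  comm: "Par (Pre (In a) P) (Pre (Out a) Q) \<longmapsto> Par P Q"
| parL: "P \<longmapsto> P' \<Longrightarrow> Par P Q \<longmapsto> Par P' Q"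
| parR: "Q \<longmapsto> Q' \<Longrightarrow> Par P Q \<longmapsto> Par P Q'"
| struct: "P \<equiv>\<^sub>s P' \<Longrightarrow> P' \<longmapsto> Q' \<Longrightarrow> Q' \<equiv>\<^sub>s Q \<Longrightarrow> P \<longmapsto> Q"

abbreviation reds :: "'n proc \<Rightarrow> 'n proc \<Rightarrow> bool" (infix "\<longmapsto>\<^sup>*" 50) where
  "P \<longmapsto>\<^sup>* Q \<equiv> red\<^sup>*\<^sup>* P Q"

fun count_in :: "'n \<Rightarrow> 'n proc \<Rightarrow> nat" where
  "count_in a Nil = 0"
| "count_in a (Pre \<alpha> P) = (if \<alpha> = In a then 1 else 0) + count_in a P"
| "count_in a (Par P Q) = count_in a P + count_in a Q"

fun count_out :: "'n \<Rightarrow> 'n proc \<Rightarrow> nat" where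
  "count_out a Nil = 0"
| "count_out a (Pre \<alpha> P) = (if \<alpha> = Out a then 1 else 0) + count_out a P"
| "count_out a (Par P Q) = count_out a P + count_out a Q"

definition linear :: "'n proc \<Rightarrow> bool" where
  "linear P \<longleftrightarrow> (\<forall>a. count_in a P \<le> 1 \<and> count_out a P \<le> 1)"

fun act_name :: "'n act \<Rightarrow> 'n" where
  "act_name (In a) = a" | "act_name (Out a) = a"

fun names :: "'n proc \<Rightarrow> 'n set" where
  "names Nil = {}"
| "names (Pre \<alpha> P) = insert (act_name \<alpha>) (names P)"
| "names (Par P Q) = names P \<union> names Q"

datatype 'n ctx = Hole | CParL "'n proc" "'n ctx" | CParR "'n ctx" "'n proc" | CPre "'n act" "'n ctx"

fun fill :: "'n ctx \<Rightarrow> 'n proc \<Rightarrow> 'n proc" where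
  "fill Hole Q = Q"
| "fill (CParL P C) Q = Par P (fill C Q)"
| "fill (CParR C P) Q = Par (fill C Q) P"
| "fill (CPre \<alpha> C) Q = Pre \<alpha> (fill C Q)"

definition inp :: "'n \<Rightarrow> 'n proc \<Rightarrow> bool" where
  "inp a Q \<longleftrightarrow> (\<exists>Q' Q''. Q \<equiv>\<^sub>s Par Q' (Pre (In a) Q''))"

definition outp :: "'n \<Rightarrow> 'n proc \<Rightarrow> bool" where
  "outp a Q \<longleftrightarrow> (\<exists>Q' Q''. Q \<equiv>\<^sub>s Par Q' (Pre (Out a) Q''))"

definition sync :: "'n \<Rightarrow> 'n proc \<Rightarrow> bool" where
  "sync a Q \<longleftrightarrow> inp a Q \<and> outp a Q"

definition cin :: "'n \<Rightarrow> 'n proc \<Rightarrow> bool" where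
  "cin a P \<longleftrightarrow> (\<exists>C Q. P \<equiv>\<^sub>s fill C Q \<and> inp a Q)"

definition cout :: "'n \<Rightarrow> 'n proc \<Rightarrow> bool" where
  "cout a P \<longleftrightarrow> (\<exists>C Q. P \<equiv>\<^sub>s fill C Q \<and> outp a Q)"

end

theory Submission
  imports Defs
begin

lemma scong_counts: "P \<equiv>\<^sub>s Q \<Longrightarrow> count_in c P = count_in c Q \<and> count_out c P = count_out c Q"
  by (induction rule: scong.induct) auto

lemma names_iff: "c \<in> names P \<longleftrightarrow> count_in c P > 0 \<or> count_out c P > 0"
proof (induction P)
  case (Pre x P) then show ?case by (cases x) auto
qed auto

lemma pre_inp: "Pre \<alpha> X \<equiv>\<^sub>s Par Nil (Pre \<alpha> X)"
  by (meson scong.par_comm scong.par_nil scong.sym scong.trans)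

lemma fill_in: "count_in c X \<le> count_in c (fill C X)"
  by (induction C) auto
lemma fill_out: "count_out c X \<le> count_out c (fill C X)"
  by (induction C) auto

lemma ex_ctx_in: "count_in a P > 0 \<Longrightarrow> \<exists>C X. P = fill C (Pre (In a) X)"
proof (induction P)
  case Nil then show ?case by simp
next
  case (Pre x P)
  show ?case
  proof (cases "x = In a")
    case True then show ?thesis by (metis fill.simps(1))
  next
    case False
    with Pre obtain C X where "P = fill C (Pre (In a) X)" by auto
    then show ?thesis by (metis fill.simps(4))
  qed
next
  case (Par P1 P2)
  show ?case
  proof (cases "count_in a P1 > 0")
    case True
    with Par obtain C X where "P1 = fill C (Pre (In a) X)" by auto
    then show ?thesis by (metis fill.simps(3))
  next
    case False
    with Par obtain C X where "P2 = fill C (Pre (In a) X)" by auto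
    then show ?thesis by (metis fill.simps(2))
  qed
qed

lemma ex_ctx_out: "count_out a P > 0 \<Longrightarrow> \<exists>C X. P = fill C (Pre (Out a) X)"
proof (induction P)
  case Nil then show ?case by simp
next
  case (Pre x P)
  show ?case
  proof (cases "x = Out a")
    case True then show ?thesis by (metis fill.simps(1))
  next
    case False
    with Pre obtain C X where "P = fill C (Pre (Out a) X)" by auto
    then show ?thesis by (metis fill.simps(4))
  qed
next
  case (Par P1 P2)
  show ?case
  proof (cases "count_out a P1 > 0")
    case True
    with Par obtain C X where "P1 = fill C (Pre (Out a) X)" by auto
    then show ?thesis by (metis fill.simps(3))
  next
    case False
    with Par obtain C X where "P2 = fill C (Pre (Out a) X)" by auto
    then show ?thesis by (metis fill.simps(2))
  qed
qed

lemma cin_iff: "cin a P \<longleftrightarrow> count_in a P > 0"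
proof
  assume "cin a P"
  then obtain C X Q' Q'' where h1: "P \<equiv>\<^sub>s fill C X" and h2: "X \<equiv>\<^sub>s Par Q' (Pre (In a) Q'')"
    unfolding cin_def inp_def by blast
  have "count_in a X = count_in a (Par Q' (Pre (In a) Q''))" using scong_counts[OF h2] by blast
  then have "count_in a X > 0" by simp
  moreover have "count_in a P = count_in a (fill C X)" using scong_counts[OF h1] by blast
  ultimately show "count_in a P > 0" using fill_in[of a X C] by linarith
next
  assume "count_in a P > 0"
  then obtain C X where e: "P = fill C (Pre (In a) X)" using ex_ctx_in[of a P] by blast
  have "P \<equiv>\<^sub>s fill C (Pre (In a) X)" unfolding e by (rule scong.refl)
  moreover have "inp a (Pre (In a) X)" unfolding inp_def using pre_inp by blast
  ultimately show "cin a P" unfolding cin_def by blast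
qed

lemma cout_iff: "cout a P \<longleftrightarrow> count_out a P > 0"
proof
  assume "cout a P"
  then obtain C X Q' Q'' where h1: "P \<equiv>\<^sub>s fill C X" and h2: "X \<equiv>\<^sub>s Par Q' (Pre (Out a) Q'')"
    unfolding cout_def outp_def by blast
  have "count_out a X = count_out a (Par Q' (Pre (Out a) Q''))" using scong_counts[OF h2] by blast
  then have "count_out a X > 0" by simp
  moreover have "count_out a P = count_out a (fill C X)" using scong_counts[OF h1] by blast
  ultimately show "count_out a P > 0" using fill_out[of a X C] by linarith
next
  assume "count_out a P > 0"
  then obtain C X where e: "P = fill C (Pre (Out a) X)" using ex_ctx_out[of a P] by blast
  have "P \<equiv>\<^sub>s fill C (Pre (Out a) X)" unfolding e by (rule scong.refl)
  moreover have "outp a (Pre (Out a) X)" unfolding outp_def using pre_inp by blast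
  ultimately show "cout a P" unfolding cout_def by blast
qed

declare scong.trans[trans]

lemma inp_parL: "inp b P \<Longrightarrow> inp b (Par P Q)"
proof -
  assume "inp b P"
  then obtain Q' Q'' where h: "P \<equiv>\<^sub>s Par Q' (Pre (In b) Q'')" unfolding inp_def by blast
  have "Par P Q \<equiv>\<^sub>s Par (Par Q' (Pre (In b) Q'')) Q" using h by (rule scong.cong_parL)
  also have "\<dots> \<equiv>\<^sub>s Par Q (Par Q' (Pre (In b) Q''))" by (rule scong.par_comm)
  also have "\<dots> \<equiv>\<^sub>s Par (Par Q Q') (Pre (In b) Q'')" by (rule scong.par_assoc)
  finally show ?thesis unfolding inp_def by blast
qed

lemma outp_parL: "outp b P \<Longrightarrow> outp b (Par P Q)"
proof -
  assume "outp b P"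
  then obtain Q' Q'' where h: "P \<equiv>\<^sub>s Par Q' (Pre (Out b) Q'')" unfolding outp_def by blast
  have "Par P Q \<equiv>\<^sub>s Par (Par Q' (Pre (Out b) Q'')) Q" using h by (rule scong.cong_parL)
  also have "\<dots> \<equiv>\<^sub>s Par Q (Par Q' (Pre (Out b) Q''))" by (rule scong.par_comm)
  also have "\<dots> \<equiv>\<^sub>s Par (Par Q Q') (Pre (Out b) Q'')" by (rule scong.par_assoc)
  finally show ?thesis unfolding outp_def by blast
qed

lemma sync_scong:
  assumes h: "P \<equiv>\<^sub>s P'" and s: "sync b P'" shows "sync b P"
proof -
  from s obtain A B C D where 1: "P' \<equiv>\<^sub>s Par A (Pre (In b) B)" and 2: "P' \<equiv>\<^sub>s Par C (Pre (Out b) D)"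
    unfolding sync_def inp_def outp_def by blast
  have "P \<equiv>\<^sub>s Par A (Pre (In b) B)" using h 1 by (rule scong.trans)
  moreover have "P \<equiv>\<^sub>s Par C (Pre (Out b) D)" using h 2 by (rule scong.trans)
  ultimately show ?thesis unfolding sync_def inp_def outp_def by blast
qed

lemma sync_parL: "sync b P \<Longrightarrow> sync b (Par P Q)"
  unfolding sync_def by (simp add: inp_parL outp_parL)

lemma sync_parR: "sync b Q \<Longrightarrow> sync b (Par P Q)"
proof -
  assume "sync b Q"
  then have "sync b (Par Q P)" by (rule sync_parL)
  then show ?thesis by (rule sync_scong[OF scong.par_comm])
qed

lemma red_char: "R \<longmapsto> R' \<Longrightarrow> \<exists>b. sync b R \<and>
   (\<forall>c. count_in c R = count_in c R' + (if c = b then 1 else 0)) \<and>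
   (\<forall>c. count_out c R = count_out c R' + (if c = b then 1 else 0))"
proof (induction rule: red.induct)
  case (comm a P Q)
  have "sync a (Par (Pre (In a) P) (Pre (Out a) Q))"
    unfolding sync_def inp_def outp_def using scong.par_comm scong.refl by blast
  then show ?case by (intro exI[of _ a]) auto
next
  case (parL P P' Q) then show ?case using sync_parL by fastforce
next
  case (parR Q Q' P) then show ?case using sync_parR by fastforce
next
  case (struct P P' Q' Q)
  then obtain b where "sync b P'"
   "(\<forall>c. count_in c P' = count_in c Q' + (if c = b then 1 else 0))"
   "(\<forall>c. count_out c P' = count_out c Q' + (if c = b then 1 else 0))" by blast
  moreover have "sync b P" using sync_scong[OF struct(1)] \<open>sync b P'\<close> by blast
  ultimately show ?case using scong_counts[OF struct(1)] scong_counts[OF struct(3)]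
    by (intro exI[of _ b]) simp
qed

lemma reds_dec: "X \<longmapsto>\<^sup>* Y \<Longrightarrow> count_in c Y \<le> count_in c X \<and> count_out c Y \<le> count_out c X"
proof (induction rule: rtranclp_induct)
  case (step y z)
  from red_char[OF step(2)] obtain b where
   "(\<forall>c. count_in c y = count_in c z + (if c = b then 1 else 0))"
   "(\<forall>c. count_out c y = count_out c z + (if c = b then 1 else 0))" by blast
  then have "count_in c z \<le> count_in c y" "count_out c z \<le> count_out c y"
    by (metis le_add1)+
  then show ?case using step(3) by linarith
qed auto

lemma reds_bal: "X \<longmapsto>\<^sup>* Y \<Longrightarrow> count_in c X + count_out c Y = count_in c Y + count_out c X"
proof (induction rule: rtranclp_induct)
  case (step y z)
  from red_char[OF step(2)] obtain b where
   "(\<forall>c. count_in c y = count_in c z + (if c = b then 1 else 0))"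
   "(\<forall>c. count_out c y = count_out c z + (if c = b then 1 else 0))" by blast
  then have "count_in c y = count_in c z + (if c = b then 1 else 0)"
     "count_out c y = count_out c z + (if c = b then 1 else 0)" by blast+
  then show ?case using step(3) by (cases "c = b") simp_all
qed auto

lemma reds_linear: "X \<longmapsto>\<^sup>* Y \<Longrightarrow> linear X \<Longrightarrow> linear Y"
  unfolding linear_def by (meson reds_dec order_trans)

lemma main:
  assumes "P \<longmapsto>\<^sup>* Q"
  shows "linear P \<Longrightarrow> count_in a P + count_out a P > 0 \<Longrightarrow> count_in a Q + count_out a Q = 0 \<Longrightarrow>
    (\<exists>Ra Ra'. P \<longmapsto>\<^sup>* Ra \<and> Ra \<longmapsto> Ra' \<and> Ra' \<longmapsto>\<^sup>* Q \<and>
                 a \<notin> names Ra' \<and> names Ra' \<union> {a} = names Ra \<and> sync a Ra)"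
  using assms
proof (induction rule: converse_rtranclp_induct)
  case base then show ?case by simp
next
  case (step y z)
  from red_char[OF step(1)] obtain b where sb: "sync b y" and
   ci: "(\<forall>c. count_in c y = count_in c z + (if c = b then 1 else 0))" and
   co: "(\<forall>c. count_out c y = count_out c z + (if c = b then 1 else 0))" by blast
  show ?case
  proof (cases "count_in a z + count_out a z > 0")
    case True
    have yz: "y \<longmapsto>\<^sup>* z" using step(1) by (rule r_into_rtranclp)
    have "linear z" using reds_linear[OF yz step(4)] .
    from step(3)[OF this True step(6)] obtain Ra Ra' where
      h: "z \<longmapsto>\<^sup>* Ra" "Ra \<longmapsto> Ra'" "Ra' \<longmapsto>\<^sup>* Q"
         "a \<notin> names Ra'" "names Ra' \<union> {a} = names Ra" "sync a Ra" by blast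
    have "y \<longmapsto>\<^sup>* Ra" using yz h(1) by (rule rtranclp_trans)
    then show ?thesis using h by (intro exI[of _ Ra] exI[of _ Ra']) simp
  next
    case False
    then have z0: "count_in a z = 0" "count_out a z = 0" by auto
    have ab: "b = a"
    proof (rule ccontr)
      assume "b \<noteq> a"
      then have "count_in a y = count_in a z" "count_out a y = count_out a z"
        using ci co by simp_all
      then show False using z0 step(5) by simp
    qed
    have "a \<notin> names z" using names_iff[of a z] z0 by simp
    moreover have "names z \<union> {a} = names y"
    proof (rule set_eqI)
      fix c
      show "c \<in> names z \<union> {a} \<longleftrightarrow> c \<in> names y"
      proof (cases "c = a")
        case True
        have "count_in a y = count_in a z + 1" using ci ab by simp
        then show ?thesis using True names_iff[of a y] by simp
      next
        case False
        then have "count_in c y = count_in c z" "count_out c y = count_out c z"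
          using ci co ab by simp_all
        then show ?thesis using False names_iff[of c y] names_iff[of c z] by simp
      qed
    qed
    ultimately show ?thesis using step(1) step(2) sb ab
      by (intro exI[of _ y] exI[of _ z]) simp
  qed
qed

theorem lemma2:
  fixes P Q :: "'n proc" and a :: 'n
  assumes "linear P" and "P \<longmapsto>\<^sup>* Q"
  shows "(cin a P \<longrightarrow>
            (cin a Q \<noteq>
              (a \<notin> names Q \<and> (\<exists>Ra Ra'. P \<longmapsto>\<^sup>* Ra \<and> Ra \<longmapsto> Ra' \<and> Ra' \<longmapsto>\<^sup>* Q \<and>
                 a \<notin> names Ra' \<and> names Ra' \<union> {a} = names Ra \<and> sync a Ra))))
       \<and> (cout a P \<longrightarrow>
            (cout a Q \<noteq>
              (a \<notin> names Q \<and> (\<exists>Ra Ra'. P \<longmapsto>\<^sup>* Ra \<and> Ra \<longmapsto> Ra' \<and> Ra' \<longmapsto>\<^sup>* Q \<and>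
                 a \<notin> names Ra' \<and> names Ra' \<union> {a} = names Ra \<and> sync a Ra))))"
proof -
  let ?E = "\<exists>Ra Ra'. P \<longmapsto>\<^sup>* Ra \<and> Ra \<longmapsto> Ra' \<and> Ra' \<longmapsto>\<^sup>* Q \<and>
                 a \<notin> names Ra' \<and> names Ra' \<union> {a} = names Ra \<and> sync a Ra"
  have key: "?E \<and> a \<notin> names Q"
    if t1: "count_in a P + count_out a P > 0" and t2: "count_in a Q = 0" and t3: "count_out a Q = 0"
  proof
    show ?E using main[OF assms(2) assms(1) t1] t2 t3 by simp
    show "a \<notin> names Q" using t2 t3 names_iff[of a Q] by simp
  qed
  have inQ: "a \<in> names Q" if "count_in a Q > 0 \<or> count_out a Q > 0" using that names_iff[of a Q] by simp
  have bal: "count_in a P + count_out a Q = count_in a Q + count_out a P"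
    using reds_bal[OF assms(2)] by blast
  have linP: "count_in a P \<le> 1" "count_out a P \<le> 1" using assms(1) unfolding linear_def by blast+
  have A: "cin a Q \<noteq> (a \<notin> names Q \<and> ?E)" if "cin a P"
  proof -
    have p: "count_in a P > 0" using that unfolding cin_iff .
    show ?thesis
    proof (cases "count_in a Q > 0")
      case True then show ?thesis using cin_iff[of a Q] inQ by simp
    next
      case False
      then have q: "count_in a Q = 0" by simp
      then have "count_out a Q = 0" using bal linP p by linarith
      then have "?E \<and> a \<notin> names Q" using key p q by simp
      then show ?thesis using q cin_iff[of a Q] by simp
    qed
  qed
  have B: "cout a Q \<noteq> (a \<notin> names Q \<and> ?E)" if "cout a P"
  proof -
    have p: "count_out a P > 0" using that unfolding cout_iff .
    show ?thesis
    proof (cases "count_out a Q > 0")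
      case True then show ?thesis using cout_iff[of a Q] inQ by simp
    next
      case False
      then have q: "count_out a Q = 0" by simp
      then have "count_in a Q = 0" using bal linP p by linarith
      then have "?E \<and> a \<notin> names Q" using key p q by simp
      then show ?thesis using q cout_iff[of a Q] by simp
    qed
  qed
  show ?thesis
  proof (intro conjI impI)
    assume "cin a P" then show "cin a Q \<noteq> (a \<notin> names Q \<and> ?E)" by (rule A)
  next
    assume "cout a P" then show "cout a Q \<noteq> (a \<notin> names Q \<and> ?E)" by (rule B)
  qed
qed

end
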